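(* Suppose all edge probabilities $p_{ij}$ and the community size $r$ are known, and fix $\epsilon>0$. Consider the scan test that rejects the null hypothesis (outputs $1$) if and only if \[ T^{\mathsf k}:=\max_{D\subseteq V,\ 1\le|D|\le r}T^{\mathsf k}_D\ \ge\ 1+\frac{\epsilon}{2}. \] This test is asymptotically powerful provided the following three conditions hold: $r=o(n)$; $\mathbb{E}_C[e(D^\star_C)]\to\infty$ for all $C\subseteq V$ with $|C|=r$; and for every $C\subseteq V$ with $|C|=r$, \[ \max_{\emptyset\ne D\subseteq C}\frac{\mathbb{E}_0[e(D)]\,h(\rho_C-1)}{|D|\log(n/|D|)}\ge1+\epsilon . \]
   Context: Setting. For each $n$ let $V=\{1,\dots,n\}$, let $p_{ij}=p_{ji}\in[0,1]$ ($i\ne j$) be edge probabilities, let $r=r_n$ be a community size, and for every $C\subseteq V$ with $|C|=r$ let $\rho_C>1$ be a scaling with $\rho_Cp_{ij}\le1$ for $i,j\in C$. All of these may depend on $n$, and limits are as $n\to\infty$. One observes a simple undirected graph on $V$ with adjacency matrix $A$. Under $\mathbb{P}_0$ the $A_{ij}$, $i<j$, are independent $\mathrm{Bern}(p_{ij})$. Under $\mathbb{P}_C$ ($|C|=r$) they are independent with $A_{ij}\sim\mathrm{Bern}(\rho_Cp_{ij})$ if $i,j\in C$ and $\mathrm{Bern}(p_{ij})$ otherwise. $\mathbb{E}_0$ and $\mathbb{E}_C$ are the corresponding expectations. A test $\psi_n$ (a map from graphs to $\{0,1\}$) has worst-case risk $R_n(\psi_n)=\mathbb{P}_0(\psi_n\ne0)+\max_{|C|=r}\mathbb{P}_C(\psi_n\ne1)$.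 It is asymptotically powerful if $R_n(\psi_n)\to0$. Notation. $e(D)=\sum_{i<j,\ i,j\in D}A_{ij}$. $h(x)=(x+1)\log(x+1)-x$. $[x]_+=\max\{x,0\}$. For $D\subseteq V$, \[ T^{\mathsf k}_D=\frac{\mathbb{E}_0[e(D)]\,h\big([e(D)/\mathbb{E}_0[e(D)]-1]_+\big)}{|D|\log(n/|D|)}, \] with the convention $T^{\mathsf k}_D=0$ when $\mathbb{E}_0[e(D)]=0$. For $C$ with $|C|=r$, $D^\star_C$ denotes a maximizer of $\frac{\mathbb{E}_0[e(D)]}{|D|\log(n/|D|)}$ over nonempty $D\subseteq C$ (the "most informative subgraph"). *)

theory Defs
  imports Complex_Main
begin

definition verts :: "nat \<Rightarrow> nat set" where
  "verts n = {1..n}"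

definition vpairs :: "nat \<Rightarrow> (nat \<times> nat) set" where
  "vpairs n = {(i,j). i \<in> verts n \<and> j \<in> verts n \<and> i < j}"

definition graphs :: "nat \<Rightarrow> (nat \<times> nat) set set" where
  "graphs n = Pow (vpairs n)"

definition graph_prob :: "nat \<Rightarrow> (nat \<Rightarrow> nat \<Rightarrow> real) \<Rightarrow> (nat \<times> nat) set \<Rightarrow> real" where
  "graph_prob n q G = (\<Prod>(i,j)\<in>vpairs n. if (i,j) \<in> G then q i j else 1 - q i j)"

definition prob_ev :: "nat \<Rightarrow> (nat \<Rightarrow> nat \<Rightarrow> real) \<Rightarrow> ((nat \<times> nat) set \<Rightarrow> bool) \<Rightarrow> real" where
  "prob_ev n q P = (\<Sum>G\<in>{G\<in>graphs n. P G}. graph_prob n q G)"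

definition expect :: "nat \<Rightarrow> (nat \<Rightarrow> nat \<Rightarrow> real) \<Rightarrow> ((nat \<times> nat) set \<Rightarrow> real) \<Rightarrow> real" where
  "expect n q f = (\<Sum>G\<in>graphs n. graph_prob n q G * f G)"

definition alt_prob :: "(nat \<Rightarrow> nat \<Rightarrow> real) \<Rightarrow> real \<Rightarrow> nat set \<Rightarrow> nat \<Rightarrow> nat \<Rightarrow> real" where
  "alt_prob p \<rho> C i j = (if i \<in> C \<and> j \<in> C then \<rho> * p i j else p i j)"

definition ecount :: "nat set \<Rightarrow> (nat \<times> nat) set \<Rightarrow> real" where
  "ecount D G = real (card {(i,j)\<in>G. i \<in> D \<and> j \<in> D})"

definition hfun :: "real \<Rightarrow> real" where
  "hfun x = (x + 1) * ln (x + 1) - x"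

definition scanT :: "nat \<Rightarrow> (nat \<Rightarrow> nat \<Rightarrow> real) \<Rightarrow> nat set \<Rightarrow> (nat \<times> nat) set \<Rightarrow> real" where
  "scanT n p D G =
     (let m = expect n p (ecount D) in
      if m = 0 then 0
      else m * hfun (max (ecount D G / m - 1) 0) / (real (card D) * ln (real n / real (card D))))"

definition scan_test :: "nat \<Rightarrow> (nat \<Rightarrow> nat \<Rightarrow> real) \<Rightarrow> nat \<Rightarrow> real \<Rightarrow> (nat \<times> nat) set \<Rightarrow> nat" where
  "scan_test n p r \<epsilon> G =
     (if (\<exists>D. D \<subseteq> verts n \<and> 1 \<le> card D \<and> card D \<le> r \<and> scanT n p D G \<ge> 1 + \<epsilon> / 2) then 1 else 0)"

definition communities :: "nat \<Rightarrow> nat \<Rightarrow> nat set set" where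
  "communities n r = {C. C \<subseteq> verts n \<and> card C = r}"

definition risk :: "nat \<Rightarrow> (nat \<Rightarrow> nat \<Rightarrow> real) \<Rightarrow> (nat set \<Rightarrow> real) \<Rightarrow> nat
                    \<Rightarrow> ((nat \<times> nat) set \<Rightarrow> nat) \<Rightarrow> real" where
  "risk n p \<rho> r \<psi> =
     prob_ev n p (\<lambda>G. \<psi> G \<noteq> 0)
     + Max ((\<lambda>C. prob_ev n (alt_prob p (\<rho> C) C) (\<lambda>G. \<psi> G \<noteq> 1)) ` communities n r)"

definition info_ratio :: "nat \<Rightarrow> (nat \<Rightarrow> nat \<Rightarrow> real) \<Rightarrow> nat set \<Rightarrow> real" where
  "info_ratio n p D = expect n p (ecount D) / (real (card D) * ln (real n / real (card D)))"

definition most_informative :: "nat \<Rightarrow> (nat \<Rightarrow> nat \<Rightarrow> real) \<Rightarrow> nat set \<Rightarrow> nat set \<Rightarrow> bool" where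
  "most_informative n p C D \<longleftrightarrow> D \<noteq> {} \<and> D \<subseteq> C \<and>
     (\<forall>D'. D' \<noteq> {} \<and> D' \<subseteq> C \<longrightarrow> info_ratio n p D' \<le> info_ratio n p D)"

end

theory Submission
  imports Defs
begin


lemma exp_neg_le_quad:
  fixes s :: real assumes "0 \<le> s"
  shows "exp (-s) \<le> 1 - s + s^2/2"
proof -
  let ?f = "\<lambda>x::real. 1 - x + x^2/2 - exp (-x)"
  have "?f 0 \<le> ?f s"
  proof (rule DERIV_nonneg_imp_nondecreasing[OF assms])
    fix x :: real assume "0 \<le> x" "x \<le> s"
    show "\<exists>y. DERIV ?f x :> y \<and> y \<ge> 0"
    proof (intro exI conjI)
      show "DERIV ?f x :> (-1 + x + exp (-x))"
        by (auto intro!: derivative_eq_intros)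
      show "-1 + x + exp (-x) \<ge> 0" using exp_ge_add_one_self[of "-x"] by simp
    qed
  qed
  then show ?thesis by simp
qed

lemma xexp_quad:
  fixes u :: real assumes "0 \<le> u"
  shows "u^2/2 \<le> u * exp u - exp u + 1"
proof -
  let ?f = "\<lambda>x::real. x * exp x - exp x + 1 - x^2/2"
  have "?f 0 \<le> ?f u"
  proof (rule DERIV_nonneg_imp_nondecreasing[OF assms])
    fix x :: real assume "0 \<le> x" "x \<le> u"
    show "\<exists>y. DERIV ?f x :> y \<and> y \<ge> 0"
    proof (intro exI conjI)
      show "DERIV ?f x :> (x * (exp x - 1))"
        by (auto intro!: derivative_eq_intros simp: algebra_simps)
      show "x * (exp x - 1) \<ge> 0" using \<open>0 \<le> x\<close> by simp
    qed
  qed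
  then show ?thesis by simp
qed

lemma hfun_rho: "\<rho> > 0 \<Longrightarrow> hfun (\<rho> - 1) = \<rho> * ln \<rho> - \<rho> + 1"
  by (simp add: hfun_def)

lemma hfun_rho_quad:
  fixes \<rho> :: real
  assumes "\<rho> \<ge> 1" shows "(ln \<rho>)^2/2 \<le> \<rho> * ln \<rho> - \<rho> + 1"
proof -
  have "0 \<le> ln \<rho>" using assms by simp
  have e: "exp (ln \<rho>) = \<rho>" using assms by simp
  have "(ln \<rho>)^2/2 \<le> ln \<rho> * exp (ln \<rho>) - exp (ln \<rho>) + 1"
    by (rule xexp_quad) fact
  hence "(ln \<rho>)^2/2 \<le> ln \<rho> * \<rho> - \<rho> + 1" unfolding e .
  thus ?thesis by (metis mult.commute)
qed

lemma pow_fact_le_exp: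
  fixes x :: real assumes "0 \<le> x"
  shows "x ^ k / fact k \<le> exp x"
proof -
  have s: "summable (\<lambda>n. inverse (fact n) * x^n)" by (rule summable_exp)
  have "(\<Sum>n\<in>{k}. inverse (fact n) * x^n) \<le> (\<Sum>n. inverse (fact n) * x^n)"
    by (rule sum_le_suminf[OF s]) (use assms in auto)
  also have "\<dots> = exp x" by (simp add: exp_def scaleR_conv_of_real field_simps)
  finally show ?thesis by (simp add: field_simps)
qed

lemma choose_fact_le: "k \<le> n \<Longrightarrow> real (n choose k) * fact k \<le> real n ^ k"
proof -
  assume kn: "k \<le> n"
  have "fact k * fact (n - k) * (n choose k) = fact n" by (rule binomial_fact_lemma[OF kn])
  hence "fact n = ((n choose k) * fact k) * (fact (n - k) :: nat)" by (simp add: mult_ac)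
  hence "(n choose k) * fact k = fact n div (fact (n - k) :: nat)" by simp
  also have "\<dots> \<le> n ^ k" by (rule fact_div_fact_le_pow[OF kn])
  finally have "(n choose k) * fact k \<le> n ^ k" .
  hence "real ((n choose k) * fact k) \<le> real (n ^ k)" by linarith
  thus ?thesis by (simp add: of_nat_mult)
qed



definition PD :: "nat \<Rightarrow> nat set \<Rightarrow> (nat \<times> nat) set" where
  "PD n D = {(i,j)\<in>vpairs n. i \<in> D \<and> j \<in> D}"

definition valid :: "nat \<Rightarrow> (nat \<Rightarrow> nat \<Rightarrow> real) \<Rightarrow> bool" where
  "valid n q \<longleftrightarrow> (\<forall>i j. (i,j) \<in> vpairs n \<longrightarrow> 0 \<le> q i j \<and> q i j \<le> 1)"

lemma finite_vpairs[simp]: "finite (vpairs n)"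
proof -
  have "vpairs n \<subseteq> verts n \<times> verts n" by (auto simp: vpairs_def)
  thus ?thesis by (rule finite_subset) (simp add: verts_def)
qed

lemma finite_graphs[simp]: "finite (graphs n)"
  by (simp add: graphs_def)

lemma finite_PD[simp]: "finite (PD n D)"
  by (rule finite_subset[of _ "vpairs n"]) (auto simp: PD_def)

lemma PD_sub: "PD n D \<subseteq> vpairs n" by (auto simp: PD_def)

lemma sum_pow_prod:
  fixes a b :: "'a \<Rightarrow> 'c::comm_semiring_1"
  assumes "finite S"
  shows "(\<Sum>G\<in>Pow S. \<Prod>x\<in>S. if x \<in> G then a x else b x) = (\<Prod>x\<in>S. a x + b x)"
proof -
  have "(\<Prod>x\<in>S. a x + b x) = (\<Sum>X\<in>Pow S. (\<Prod>x\<in>X. a x) * (\<Prod>x\<in>S-X. b x))"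
    by (rule prod_add[OF assms])
  also have "\<dots> = (\<Sum>G\<in>Pow S. \<Prod>x\<in>S. if x \<in> G then a x else b x)"
  proof (rule sum.cong[OF refl])
    fix G assume "G \<in> Pow S"
    hence "S \<inter> {x. x \<in> G} = G" "S \<inter> - {x. x \<in> G} = S - G" by auto
    thus "(\<Prod>x\<in>G. a x) * (\<Prod>x\<in>S-G. b x) = (\<Prod>x\<in>S. if x \<in> G then a x else b x)"
      by (simp add: prod.If_cases[OF assms])
  qed
  finally show ?thesis by simp
qed

lemma graph_prob_alt:
  "graph_prob n q G = (\<Prod>x\<in>vpairs n. if x \<in> G then case_prod q x else 1 - case_prod q x)"
  unfolding graph_prob_def by (rule prod.cong) auto

lemma graph_prob_nonneg: "valid n q \<Longrightarrow> graph_prob n q G \<ge> 0"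
  unfolding graph_prob_alt valid_def
  by (rule prod_nonneg) (auto simp: split_def)

lemma prob_ev_expect: "prob_ev n q P = expect n q (\<lambda>G. if P G then 1 else 0)"
  unfolding prob_ev_def expect_def
  by (simp add: sum.inter_filter[symmetric] if_distrib cong: if_cong)

lemma expect_mono:
  assumes "valid n q" "\<And>G. G \<in> graphs n \<Longrightarrow> f G \<le> g G"
  shows "expect n q f \<le> expect n q g"
  unfolding expect_def
  by (rule sum_mono, rule mult_left_mono) (use assms graph_prob_nonneg in auto)

lemma markov:
  assumes "valid n q" "\<And>G. f G \<ge> 0" "\<And>G. P G \<Longrightarrow> f G \<ge> 1"
  shows "prob_ev n q P \<le> expect n q f"
  unfolding prob_ev_expect
  by (rule expect_mono) (use assms in auto)

lemma expect_sum:
  "expect n q (\<lambda>G. \<Sum>D\<in>A. f D G) = (\<Sum>D\<in>A. expect n q (f D))"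
  unfolding expect_def by (simp add: sum_distrib_left sum.swap[of _ A])

lemma union_bound:
  assumes "valid n q" "finite A"
  shows "prob_ev n q (\<lambda>G. \<exists>D\<in>A. P D G) \<le> (\<Sum>D\<in>A. prob_ev n q (P D))"
proof -
  have "prob_ev n q (\<lambda>G. \<exists>D\<in>A. P D G) \<le> expect n q (\<lambda>G. \<Sum>D\<in>A. if P D G then 1 else 0)"
  proof (rule markov[OF assms(1)])
    fix G show "0 \<le> (\<Sum>D\<in>A. if P D G then 1 else 0::real)" by (rule sum_nonneg) auto
    assume "\<exists>D\<in>A. P D G"
    then obtain D where D: "D \<in> A" "P D G" by blast
    have "(\<Sum>D\<in>{D}. if P D G then 1 else 0::real) \<le> (\<Sum>D\<in>A. if P D G then 1 else 0)"
      by (rule sum_mono2) (use D assms in auto)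
    thus "1 \<le> (\<Sum>D\<in>A. if P D G then 1 else 0::real)" using D by simp
  qed
  also have "\<dots> = (\<Sum>D\<in>A. prob_ev n q (P D))"
    by (simp add: expect_sum prob_ev_expect)
  finally show ?thesis .
qed

lemma ecount_PD: "G \<subseteq> vpairs n \<Longrightarrow> ecount D G = real (card (G \<inter> PD n D))"
proof -
  assume "G \<subseteq> vpairs n"
  hence "{(i,j)\<in>G. i \<in> D \<and> j \<in> D} = G \<inter> PD n D" by (auto simp: PD_def)
  thus ?thesis by (simp add: ecount_def)
qed

lemma expect_prod:
  fixes a b :: "nat \<times> nat \<Rightarrow> real"
  assumes "\<And>G. G \<subseteq> vpairs n \<Longrightarrow> graph_prob n q G * f G = (\<Prod>x\<in>vpairs n. if x \<in> G then a x else b x)"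
  shows "expect n q f = (\<Prod>x\<in>vpairs n. a x + b x)"
  unfolding expect_def graphs_def
  by (subst sum_pow_prod[symmetric]) (auto intro!: sum.cong simp: assms)

lemma mgf_eq:
  "expect n q (\<lambda>G. exp (s * ecount D G)) =
     (\<Prod>x\<in>vpairs n. case_prod q x * (if x \<in> PD n D then exp s else 1) + (1 - case_prod q x))"
proof (rule expect_prod)
  fix G assume G: "G \<subseteq> vpairs n"
  let ?w = "\<lambda>x. if x \<in> PD n D then exp s else 1"
  have "exp (s * ecount D G) = (\<Prod>x\<in>G \<inter> PD n D. exp s)"
    by (simp add: ecount_PD[OF G] exp_of_nat2_mult)
  also have "\<dots> = (\<Prod>x\<in>G. ?w x)"
    by (simp add: prod.If_cases finite_subset[OF G] Int_def)
  also have "\<dots> = (\<Prod>x\<in>vpairs n. if x \<in> G then ?w x else 1)"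
    by (simp add: prod.If_cases Int_absorb1[OF G])
  finally have e: "exp (s * ecount D G) = (\<Prod>x\<in>vpairs n. if x \<in> G then ?w x else 1)" .
  show "graph_prob n q G * exp (s * ecount D G) =
     (\<Prod>x\<in>vpairs n. if x \<in> G then case_prod q x * ?w x else 1 - case_prod q x)"
    unfolding graph_prob_alt e prod.distrib[symmetric]
    by (rule prod.cong) auto
qed

lemma expect_ecount:
  assumes "D0 = D"
  shows "expect n q (ecount D) = (\<Sum>y\<in>PD n D. case_prod q y)"
proof -
  have "expect n q (ecount D) = expect n q (\<lambda>G. \<Sum>y\<in>PD n D. if y \<in> G then 1 else 0)"
    unfolding expect_def graphs_def
    by (rule sum.cong[OF refl]) (auto simp: ecount_PD sum.If_cases Int_commute)
  also have "\<dots> = (\<Sum>y\<in>PD n D. expect n q (\<lambda>G. if y \<in> G then 1 else 0))"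
    by (rule expect_sum)
  also have "\<dots> = (\<Sum>y\<in>PD n D. case_prod q y)"
  proof (rule sum.cong[OF refl])
    fix y assume y: "y \<in> PD n D"
    hence yv: "y \<in> vpairs n" using PD_sub by auto
    have "expect n q (\<lambda>G. if y \<in> G then 1 else 0) =
      (\<Prod>x\<in>vpairs n. case_prod q x + (if x = y then 0 else 1 - case_prod q x))"
      by (rule expect_prod) (auto simp: graph_prob_alt yv prod.If_cases intro!: prod.cong)
    also have "\<dots> = case_prod q y"
      by (subst prod.remove[OF finite_vpairs yv]) (auto intro!: prod.neutral)
    finally show "expect n q (\<lambda>G. if y \<in> G then 1 else 0) = case_prod q y" .
  qed
  finally show ?thesis .
qed



lemma expect_cmult: "expect n q (\<lambda>G. c * f G) = c * expect n q f"
  unfolding expect_def by (simp add: sum_distrib_left mult_ac)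

lemma mgf_bound:
  assumes v: "valid n q"
  shows "expect n q (\<lambda>G. exp (s * ecount D G)) \<le> exp ((exp s - 1) * expect n q (ecount D))"
proof -
  let ?w = "\<lambda>x. if x \<in> PD n D then exp s else 1"
  have sumeq: "(\<Sum>x\<in>vpairs n. case_prod q x * (?w x - 1)) = (exp s - 1) * expect n q (ecount D)"
  proof -
    have "(\<Sum>x\<in>vpairs n. case_prod q x * (?w x - 1)) = (\<Sum>x\<in>vpairs n. if x \<in> PD n D then case_prod q x * (exp s - 1) else 0)"
      by (rule sum.cong) auto
    also have "\<dots> = (\<Sum>x\<in>vpairs n \<inter> PD n D. case_prod q x * (exp s - 1))"
      by (rule sum.inter_restrict[symmetric]) simp
    also have "\<dots> = (\<Sum>x\<in>PD n D. case_prod q x * (exp s - 1))"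
      using PD_sub[of n D] by (simp add: Int_absorb1)
    finally show ?thesis by (simp add: expect_ecount sum_distrib_left mult_ac)
  qed
  have "expect n q (\<lambda>G. exp (s * ecount D G)) =
     (\<Prod>x\<in>vpairs n. case_prod q x * ?w x + (1 - case_prod q x))" by (rule mgf_eq)
  also have "\<dots> \<le> (\<Prod>x\<in>vpairs n. exp (case_prod q x * (?w x - 1)))"
  proof (rule prod_mono)
    fix x assume x: "x \<in> vpairs n"
    obtain i j where ij: "x = (i,j)" by (cases x)
    hence q: "0 \<le> q i j" "q i j \<le> 1" using v x by (auto simp: valid_def)
    have w: "0 \<le> ?w x" by simp
    have e: "case_prod q x * ?w x + (1 - case_prod q x) = 1 + q i j * (?w x - 1)"
      using ij by (simp add: algebra_simps)
    have "0 \<le> q i j * ?w x + (1 - q i j)" using q w by simp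
    hence "0 \<le> 1 + q i j * (?w x - 1)" by (simp add: algebra_simps)
    moreover have "1 + q i j * (?w x - 1) \<le> exp (q i j * (?w x - 1))" by (rule exp_ge_add_one_self)
    ultimately show "0 \<le> case_prod q x * ?w x + (1 - case_prod q x) \<and>
        case_prod q x * ?w x + (1 - case_prod q x) \<le> exp (case_prod q x * (?w x - 1))"
      unfolding e using ij by simp
  qed
  also have "\<dots> = exp (\<Sum>x\<in>vpairs n. case_prod q x * (?w x - 1))"
    by (simp only: exp_sum[OF finite_vpairs])
  also have "\<dots> = exp ((exp s - 1) * expect n q (ecount D))"
    by (simp only: sumeq)
  finally show ?thesis .
qed

lemma chernoff_upper:
  assumes v: "valid n q" and m: "expect n q (ecount D) = m" "m > 0" and a: "a \<ge> m"
  shows "prob_ev n q (\<lambda>G. a \<le> ecount D G) \<le> exp (- (a * ln (a / m) - a + m))"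
proof -
  define s where "s = ln (a / m)"
  have a0: "a > 0" using a m by simp
  have s0: "s \<ge> 0" unfolding s_def using a m by simp
  have "prob_ev n q (\<lambda>G. a \<le> ecount D G) \<le> expect n q (\<lambda>G. exp (- s * a) * exp (s * ecount D G))"
  proof (rule markov[OF v])
    fix G show "0 \<le> exp (- s * a) * exp (s * ecount D G)" by simp
    assume "a \<le> ecount D G"
    hence "0 \<le> s * (ecount D G - a)" using s0 by simp
    hence "1 \<le> exp (s * (ecount D G - a))" by simp
    moreover have "exp (- s * a) * exp (s * ecount D G) = exp (s * (ecount D G - a))"
      by (subst exp_add[symmetric]) (simp add: algebra_simps)
    ultimately show "1 \<le> exp (- s * a) * exp (s * ecount D G)" by simp
  qed
  also have "\<dots> = exp (- s * a) * expect n q (\<lambda>G. exp (s * ecount D G))"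
    by (rule expect_cmult)
  also have "\<dots> \<le> exp (- s * a) * exp ((exp s - 1) * m)"
    using mgf_bound[OF v, of s D] m by simp
  also have "\<dots> = exp (- (a * ln (a / m) - a + m))"
  proof -
    have "exp s = a / m" unfolding s_def using a0 m by simp
    hence "(exp s - 1) * m = a - m" using m by (simp add: field_simps)
    hence "- s * a + (exp s - 1) * m = - (a * ln (a / m) - a + m)" unfolding s_def by (simp add: algebra_simps)
    thus ?thesis by (simp add: exp_add[symmetric])
  qed
  finally show ?thesis .
qed

lemma chernoff_lower:
  assumes v: "valid n q" and m: "expect n q (ecount D) = \<mu>" "\<mu> > 0" and t: "t \<ge> 0"
  shows "prob_ev n q (\<lambda>G. ecount D G \<le> \<mu> - t) \<le> exp (- (t^2 / (2 * \<mu>)))"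
proof -
  define s where "s = t / \<mu>"
  have s0: "s \<ge> 0" unfolding s_def using t m by simp
  have "prob_ev n q (\<lambda>G. ecount D G \<le> \<mu> - t) \<le> expect n q (\<lambda>G. exp (s * (\<mu> - t)) * exp ((-s) * ecount D G))"
  proof (rule markov[OF v])
    fix G show "0 \<le> exp (s * (\<mu> - t)) * exp ((-s) * ecount D G)" by simp
    assume "ecount D G \<le> \<mu> - t"
    hence "0 \<le> s * (\<mu> - t - ecount D G)" using s0 by simp
    hence "1 \<le> exp (s * (\<mu> - t - ecount D G))" by simp
    moreover have "exp (s * (\<mu> - t)) * exp ((-s) * ecount D G) = exp (s * (\<mu> - t - ecount D G))"
      by (subst exp_add[symmetric]) (simp add: algebra_simps)
    ultimately show "1 \<le> exp (s * (\<mu> - t)) * exp ((-s) * ecount D G)" by simp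
  qed
  also have "\<dots> = exp (s * (\<mu> - t)) * expect n q (\<lambda>G. exp ((-s) * ecount D G))"
    by (rule expect_cmult)
  also have "\<dots> \<le> exp (s * (\<mu> - t)) * exp ((exp (-s) - 1) * \<mu>)"
    using mgf_bound[OF v, of "-s" D] m by simp
  also have "\<dots> \<le> exp (s * (\<mu> - t)) * exp ((- s + s^2/2) * \<mu>)"
    using exp_neg_le_quad[OF s0] m by simp
  also have "\<dots> = exp (- (t^2 / (2 * \<mu>)))"
  proof -
    have "s * (\<mu> - t) + (- s + s^2/2) * \<mu> = - (t^2 / (2 * \<mu>))"
      unfolding s_def using m by (simp add: field_simps power2_eq_square)
    thus ?thesis by (simp only: exp_add[symmetric])
  qed
  finally show ?thesis .
qed



lemma tangent:
  fixes m \<rho> e :: real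
  assumes m: "m > 0" and r: "\<rho> > 1" and e: "e \<ge> 0"
  shows "m * hfun (max (e/m - 1) 0) \<ge> m * (\<rho> * ln \<rho> - \<rho> + 1) + ln \<rho> * (e - \<rho> * m)"
proof (cases "e \<ge> m")
  case True
  hence e0: "e > 0" using m by simp
  have "max (e/m - 1) 0 = e/m - 1" using True m by (simp add: field_simps)
  hence "m * hfun (max (e/m - 1) 0) = m * ((e/m) * ln (e/m) - (e/m - 1))" by (simp add: hfun_def)
  also have "\<dots> = e * ln (e/m) - e + m" using m by (simp add: field_simps)
  finally have L: "m * hfun (max (e/m - 1) 0) = e * ln (e/m) - e + m" .
  have "ln (\<rho>*m/e) \<le> \<rho>*m/e - 1" by (rule ln_le_minus_one) (use m r e0 in simp)
  hence "e * ln (\<rho>*m/e) \<le> e * (\<rho>*m/e - 1)" using e0 by (simp add: mult_left_mono)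
  moreover have "e * (\<rho>*m/e - 1) = \<rho>*m - e" using e0 by (simp add: field_simps)
  ultimately have A: "e * ln (\<rho>*m/e) \<le> \<rho>*m - e" by simp
  have "ln (\<rho>*m/e) = ln \<rho> + ln m - ln e" using m r e0 by (simp add: ln_div ln_mult)
  moreover have "ln (e/m) = ln e - ln m" using m e0 by (simp add: ln_div)
  ultimately have "ln (e/m) = ln \<rho> - ln (\<rho>*m/e)" by simp
  hence "e * ln (e/m) = e * ln \<rho> - e * ln (\<rho>*m/e)" by (simp add: right_diff_distrib)
  with A L show ?thesis by (simp add: algebra_simps)
next
  case False
  have "max (e/m - 1) 0 = 0" using False m by (simp add: field_simps)
  hence L: "m * hfun (max (e/m - 1) 0) = 0" by (simp add: hfun_def)
  have lr: "0 < ln \<rho>" "ln \<rho> \<le> \<rho> - 1" using r by (auto intro: ln_le_minus_one)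
  have "ln \<rho> * e \<le> ln \<rho> * m" using False lr by (simp add: mult_left_mono)
  also have "\<dots> \<le> (\<rho> - 1) * m" using lr m by (simp add: mult_right_mono)
  finally show ?thesis unfolding L by (simp add: algebra_simps)
qed

lemma scanT_eq:
  assumes "expect n q (ecount D) = m" "m \<noteq> 0"
  shows "scanT n q D G = m * hfun (max (ecount D G / m - 1) 0) / (real (card D) * ln (real n / real (card D)))"
  using assms by (simp add: scanT_def Let_def)

lemma prob_ev_mono:
  assumes "valid n q" "\<And>G. G \<in> graphs n \<Longrightarrow> P G \<Longrightarrow> Q G"
  shows "prob_ev n q P \<le> prob_ev n q Q"
  unfolding prob_ev_def
  by (rule sum_mono2) (use assms graph_prob_nonneg in auto)

lemma prob_ev_False: "(\<And>G. G \<in> graphs n \<Longrightarrow> \<not> P G) \<Longrightarrow> prob_ev n q P = 0"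
  unfolding prob_ev_def by (rule sum.neutral) auto

lemma expect_ecount_nonneg: "valid n q \<Longrightarrow> expect n q (ecount D) \<ge> 0"
proof -
  assume v: "valid n q"
  have "(\<Sum>y\<in>PD n D. case_prod q y) \<ge> 0"
  proof (rule sum_nonneg)
    fix y assume "y \<in> PD n D"
    hence "y \<in> vpairs n" using PD_sub by blast
    thus "case_prod q y \<ge> 0" using v by (cases y) (auto simp: valid_def)
  qed
  thus ?thesis by (simp add: expect_ecount)
qed

lemma null_bound:
  assumes v: "valid n q" and k: "1 \<le> card D" "card D < n" and tau: "\<tau> > 0"
  shows "prob_ev n q (\<lambda>G. scanT n q D G \<ge> \<tau>) \<le> exp (- (\<tau> * card D * ln (real n / card D)))"
proof -
  define m where "m = expect n q (ecount D)"
  define K where "K = real (card D) * ln (real n / real (card D))"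
  have K0: "K > 0" unfolding K_def using k by simp
  have m0: "m \<ge> 0" unfolding m_def by (rule expect_ecount_nonneg[OF v])
  show ?thesis
  proof (cases "m = 0")
    case True
    hence "prob_ev n q (\<lambda>G. scanT n q D G \<ge> \<tau>) = 0"
      using tau by (intro prob_ev_False) (simp add: scanT_def Let_def m_def[symmetric])
    thus ?thesis by simp
  next
    case False
    hence mpos: "m > 0" using m0 by simp
    have sc: "\<And>G. scanT n q D G = m * hfun (max (ecount D G / m - 1) 0) / K"
      unfolding K_def by (rule scanT_eq) (use False m_def in auto)
    define E where "E = {G\<in>graphs n. scanT n q D G \<ge> \<tau>}"
    show ?thesis
    proof (cases "E = {}")
      case True
      hence "prob_ev n q (\<lambda>G. scanT n q D G \<ge> \<tau>) = 0"
        by (intro prob_ev_False) (auto simp: E_def)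
      thus ?thesis by simp
    next
      case False
      have finE: "finite E" unfolding E_def by simp
      define a where "a = Min (ecount D ` E)"
      have "a \<in> ecount D ` E" unfolding a_def using finE False by (intro Min_in) auto
      then obtain G0 where G0: "G0 \<in> E" "ecount D G0 = a" by auto
      have "scanT n q D G0 \<ge> \<tau>" using G0 by (simp add: E_def)
      hence F: "m * hfun (max (a / m - 1) 0) \<ge> \<tau> * K" using K0 G0 by (simp add: sc field_simps)
      have am: "a > m"
      proof (rule ccontr)
        assume "\<not> a > m"
        hence "max (a / m - 1) 0 = 0" using mpos by (simp add: field_simps)
        hence "m * hfun (max (a / m - 1) 0) = 0" by (simp add: hfun_def)
        with F tau K0 show False by (simp add: mult_pos_pos) (smt (verit) mult_pos_pos)
      qed
      have "m * hfun (max (a / m - 1) 0) = m * ((a/m) * ln (a/m) - (a/m - 1))"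
        using am mpos by (simp add: hfun_def field_simps)
      also have "\<dots> = a * ln (a/m) - a + m" using mpos by (simp add: field_simps)
      finally have Fa: "a * ln (a/m) - a + m \<ge> \<tau> * K" using F by simp
      have "prob_ev n q (\<lambda>G. scanT n q D G \<ge> \<tau>) \<le> prob_ev n q (\<lambda>G. a \<le> ecount D G)"
      proof (rule prob_ev_mono[OF v])
        fix G assume "G \<in> graphs n" "scanT n q D G \<ge> \<tau>"
        hence "G \<in> E" by (simp add: E_def)
        thus "a \<le> ecount D G" unfolding a_def using finE by simp
      qed
      also have "\<dots> \<le> exp (- (a * ln (a / m) - a + m))"
        by (rule chernoff_upper[OF v]) (use m_def mpos am in auto)
      also have "\<dots> \<le> exp (- (\<tau> * K))" using Fa by simp
      finally show ?thesis by (simp add: K_def mult_ac)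
    qed
  qed
qed

lemma choose_exp_bound:
  assumes "1 \<le> k" "k \<le> n"
  shows "real (n choose k) \<le> exp (real k * ln (real n / real k) + real k)"
proof -
  have k0: "real k > 0" using assms by simp
  have n0: "real n > 0" using assms by simp
  have A: "real (n choose k) * fact k \<le> real n ^ k" by (rule choose_fact_le) fact
  have B: "real k ^ k / fact k \<le> exp (real k)" by (rule pow_fact_le_exp) simp
  have B': "real k ^ k \<le> fact k * exp (real k)" using B by (simp add: field_simps)
  have "real (n choose k) * real k ^ k \<le> real (n choose k) * (fact k * exp (real k))"
    using B' by (simp add: mult_left_mono)
  also have "\<dots> = (real (n choose k) * fact k) * exp (real k)" by simp
  also have "\<dots> \<le> real n ^ k * exp (real k)" using A by (simp add: mult_right_mono)
  finally have C: "real (n choose k) * real k ^ k \<le> real n ^ k * exp (real k)" .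
  have "real (n choose k) \<le> (real n / real k) ^ k * exp (real k)"
    using C k0 by (simp add: field_simps power_divide)
  also have "(real n / real k) ^ k = exp (real k * ln (real n / real k))"
    using k0 n0 by (simp add: exp_of_nat_mult[symmetric] exp_ln_iff) (simp add: exp_of_nat_mult)
  finally show ?thesis by (simp add: exp_add)
qed

lemma geom_sum_bound:
  fixes q :: real assumes "0 \<le> q" "q \<le> 1/2"
  shows "(\<Sum>k=1..r. q ^ k) \<le> 2 * q"
proof -
  have id: "(\<Sum>k=1..r. q ^ k) * (1 - q) = q - q ^ (Suc r)"
  proof (induction r)
    case 0 show ?case by simp
  next
    case (Suc r)
    have "(\<Sum>k=1..Suc r. q ^ k) = (\<Sum>k=1..r. q ^ k) + q ^ Suc r" by simp
    hence "(\<Sum>k=1..Suc r. q ^ k) * (1 - q) = (\<Sum>k=1..r. q ^ k) * (1 - q) + q ^ Suc r * (1 - q)"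
      by (simp add: algebra_simps)
    also have "\<dots> = q - q ^ Suc r + q ^ Suc r * (1 - q)" using Suc.IH by simp
    also have "\<dots> = q - q ^ Suc (Suc r)" by (simp add: algebra_simps)
    finally show ?case .
  qed
  have "q ^ Suc r \<ge> 0" using assms by simp
  hence "(\<Sum>k=1..r. q ^ k) * (1 - q) \<le> q" using id by simp
  moreover have "(\<Sum>k=1..r. q ^ k) \<ge> 0" using assms by (simp add: sum_nonneg)
  moreover have "(\<Sum>k=1..r. q ^ k) * (1/2) \<le> (\<Sum>k=1..r. q ^ k) * (1 - q)"
    using assms calculation(2) by (intro mult_left_mono) auto
  ultimately show ?thesis by linarith
qed



lemma alt_bound:
  fixes m \<mu> \<rho> \<epsilon> :: real
  assumes v1: "valid n q1" and k: "1 \<le> card D" "card D < n"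
    and m: "expect n q0 (ecount D) = m" and mu: "expect n q1 (ecount D) = \<mu>" and mu_eq: "\<mu> = \<rho> * m"
    and r: "\<rho> > 1" and eps: "\<epsilon> > 0"
    and g: "m * (\<rho> * ln \<rho> - \<rho> + 1) \<ge> (1+\<epsilon>) * (card D * ln (real n / card D))"
  shows "prob_ev n q1 (\<lambda>G. scanT n q0 D G < 1 + \<epsilon>/2)
     \<le> exp (- min ((\<epsilon>/(2*(1+\<epsilon>)))^2 * (m * (\<rho> * ln \<rho> - \<rho> + 1)) / (4 * exp 2))
                   ((\<epsilon>/(2*(1+\<epsilon>)))^2 * \<mu> / 8))"
proof -
  define K where "K = real (card D) * ln (real n / real (card D))"
  define gg where "gg = m * (\<rho> * ln \<rho> - \<rho> + 1)"
  define c where "c = \<epsilon>/(2*(1+\<epsilon>))"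
  define L where "L = ln \<rho>"
  have K0: "K > 0" unfolding K_def using k by simp
  have L0: "L > 0" unfolding L_def using r by simp
  have hq: "L^2/2 \<le> \<rho> * ln \<rho> - \<rho> + 1" unfolding L_def by (rule hfun_rho_quad) (use r in simp)
  have hpos: "\<rho> * ln \<rho> - \<rho> + 1 > 0" using hq L0 by (smt (verit) zero_less_power half_gt_zero)
  have gK: "gg \<ge> (1+\<epsilon>) * K" using g unfolding gg_def K_def .
  have gg0: "gg > 0" using gK K0 eps by (smt (verit) mult_pos_pos)
  have m0: "m > 0" using gg0 hpos unfolding gg_def by (simp add: zero_less_mult_iff)
  have mu0: "\<mu> > 0" using m0 r mu_eq by simp
  have c0: "c > 0" "c < 1" unfolding c_def using eps by (auto simp: field_simps)
  define t where "t = c * gg / L"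
  have t0: "t \<ge> 0" unfolding t_def using c0 gg0 L0 by simp
  have sc: "\<And>G. scanT n q0 D G = m * hfun (max (ecount D G / m - 1) 0) / K"
    unfolding K_def by (rule scanT_eq) (use m m0 in auto)
  have "prob_ev n q1 (\<lambda>G. scanT n q0 D G < 1 + \<epsilon>/2) \<le> prob_ev n q1 (\<lambda>G. ecount D G \<le> \<mu> - t)"
  proof (rule prob_ev_mono[OF v1])
    fix G assume "G \<in> graphs n" and lt: "scanT n q0 D G < 1 + \<epsilon>/2"
    show "ecount D G \<le> \<mu> - t"
    proof (rule ccontr)
      assume "\<not> ecount D G \<le> \<mu> - t"
      hence et: "ecount D G - \<mu> > - t" by simp
      have e0: "ecount D G \<ge> 0" by (simp add: ecount_def)
      have "m * hfun (max (ecount D G / m - 1) 0) \<ge> gg + L * (ecount D G - \<mu>)"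
        using tangent[OF m0 r e0] unfolding gg_def L_def mu_eq .
      moreover have "L * (ecount D G - \<mu>) \<ge> L * (- t)" using et L0 by (intro mult_left_mono) auto
      moreover have "L * t = c * gg" unfolding t_def using L0 by simp
      ultimately have "m * hfun (max (ecount D G / m - 1) 0) \<ge> (1 - c) * gg" by (simp add: algebra_simps)
      moreover have "(1 - c) * gg \<ge> (1 - c) * ((1+\<epsilon>) * K)" using gK c0 by simp
      moreover have "(1 - c) * (1+\<epsilon>) = 1 + \<epsilon>/2" unfolding c_def using eps by (simp add: field_simps)
      ultimately have "m * hfun (max (ecount D G / m - 1) 0) \<ge> (1 + \<epsilon>/2) * K" by (simp add: mult.assoc[symmetric])
      hence "scanT n q0 D G \<ge> 1 + \<epsilon>/2" unfolding sc using K0 by (simp add: field_simps)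
      with lt show False by simp
    qed
  qed
  also have "\<dots> \<le> exp (- (t^2 / (2 * \<mu>)))"
    by (rule chernoff_lower[OF v1 mu mu0 t0])
  also have "\<dots> \<le> exp (- min (c^2 * gg / (4 * exp 2)) (c^2 * \<mu> / 8))"
  proof -
    have X: "t^2 / (2 * \<mu>) = c^2 * gg^2 / (2 * \<mu> * L^2)" unfolding t_def
      by (simp add: power_divide power_mult_distrib)
    have "t^2 / (2 * \<mu>) \<ge> min (c^2 * gg / (4 * exp 2)) (c^2 * \<mu> / 8)"
    proof (cases "L \<le> 2")
      case True
      have "exp (ln \<rho>) \<le> exp 2" using True unfolding L_def by simp
      hence rho2: "\<rho> \<le> exp 2" using r by simp
      have "m * (L^2/2) \<le> m * (\<rho> * ln \<rho> - \<rho> + 1)" using hq m0 by (intro mult_left_mono) auto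
      hence "m * L^2 \<le> 2 * gg" unfolding gg_def by simp
      hence "\<rho> * (m * L^2) \<le> \<rho> * (2 * gg)" using r by (intro mult_left_mono) auto
      hence A: "\<mu> * L^2 \<le> 2 * \<rho> * gg" unfolding mu_eq by (simp add: mult_ac)
      have pos: "\<mu> * L^2 > 0" using mu0 L0 by simp
      have B: "2 * \<rho> * gg / (\<mu> * L^2) \<ge> 1" using A pos by simp
      have eq: "c^2 * gg^2 / (2 * \<mu> * L^2) = (c^2 * gg / (4 * \<rho>)) * (2 * \<rho> * gg / (\<mu> * L^2))"
        using r pos by (simp add: field_simps power2_eq_square)
      have Y0: "c^2 * gg / (4 * \<rho>) \<ge> 0" using gg0 r by simp
      have "c^2 * gg / (4 * \<rho>) * 1 \<le> c^2 * gg / (4 * \<rho>) * (2 * \<rho> * gg / (\<mu> * L^2))"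
        using B Y0 by (rule mult_left_mono)
      hence "c^2 * gg^2 / (2 * \<mu> * L^2) \<ge> c^2 * gg / (4 * \<rho>)" using eq by simp
      moreover have "c^2 * gg / (4 * \<rho>) \<ge> c^2 * gg / (4 * exp 2)"
        using rho2 r gg0 c0 by (intro divide_left_mono) auto
      ultimately show ?thesis unfolding X by linarith
    next
      case False
      have "gg = \<mu> * L - \<mu> + m" unfolding gg_def mu_eq L_def by (simp add: algebra_simps)
      hence "gg - \<mu> * L / 2 = \<mu> * (L/2 - 1) + m" by (simp add: algebra_simps)
      moreover have "\<mu> * (L/2 - 1) \<ge> 0" using False mu0 by simp
      ultimately have G2: "gg \<ge> \<mu> * L / 2" using m0 by linarith
      have "\<mu> * L / 2 \<ge> 0" using mu0 L0 by simp
      hence "(\<mu> * L / 2)^2 \<le> gg^2" using G2 by (intro power_mono)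
      hence "c^2 * (\<mu> * L / 2)^2 / (2 * \<mu> * L^2) \<le> c^2 * gg^2 / (2 * \<mu> * L^2)"
        using mu0 L0 by (intro divide_right_mono mult_left_mono) auto
      moreover have "c^2 * (\<mu> * L / 2)^2 / (2 * \<mu> * L^2) = c^2 * \<mu> / 8"
        using mu0 L0 by (simp add: field_simps power2_eq_square)
      ultimately show ?thesis unfolding X by linarith
    qed
    thus ?thesis by simp
  qed
  finally show ?thesis unfolding c_def gg_def .
qed



lemma sum_by_card:
  assumes "finite V"
  shows "(\<Sum>D\<in>{D. D \<subseteq> V \<and> 1 \<le> card D \<and> card D \<le> r}. f (card D)) = (\<Sum>k=1..r. real (card V choose k) * f k)"
proof -
  let ?S = "{D. D \<subseteq> V \<and> 1 \<le> card D \<and> card D \<le> r}"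
  have fS: "finite ?S" by (rule finite_subset[of _ "Pow V"]) (use assms in auto)
  have "(\<Sum>D\<in>?S. f (card D)) = (\<Sum>k=1..r. \<Sum>D\<in>{D\<in>?S. card D = k}. f (card D))"
    by (rule sum.group[symmetric]) (use fS in auto)
  also have "\<dots> = (\<Sum>k=1..r. real (card V choose k) * f k)"
  proof (rule sum.cong[OF refl])
    fix k assume k: "k \<in> {1..r}"
    have "{D\<in>?S. card D = k} = {D. D \<subseteq> V \<and> card D = k}" using k by auto
    hence "(\<Sum>D\<in>{D\<in>?S. card D = k}. f (card D)) = (\<Sum>D\<in>{D. D \<subseteq> V \<and> card D = k}. f k)"
      by (intro sum.cong) auto
    also have "\<dots> = real (card V choose k) * f k" by (simp add: n_subsets[OF assms])
    finally show "(\<Sum>D\<in>{D\<in>?S. card D = k}. f (card D)) = real (card V choose k) * f k" .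
  qed
  finally show ?thesis .
qed

lemma alt_mean:
  assumes "D \<subseteq> C"
  shows "expect n (alt_prob p \<rho> C) (ecount D) = \<rho> * expect n p (ecount D)"
proof -
  have "(\<Sum>y\<in>PD n D. case_prod (alt_prob p \<rho> C) y) = (\<Sum>y\<in>PD n D. \<rho> * case_prod p y)"
    by (rule sum.cong) (use assms in \<open>auto simp: PD_def alt_prob_def\<close>)
  thus ?thesis by (simp add: expect_ecount sum_distrib_left)
qed

lemma g_lemma:
  fixes a a' h K K' \<epsilon> :: real
  assumes "a' * h / K' \<ge> 1 + \<epsilon>" "a' / K' \<le> a / K" "h > 0" "K > 0"
  shows "a * h \<ge> (1 + \<epsilon>) * K"
proof -
  have "a' * h / K' = (a' / K') * h" by simp
  also have "\<dots> \<le> (a / K) * h" using assms by (intro mult_right_mono) auto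
  finally have "1 + \<epsilon> \<le> (a / K) * h" using assms(1) by linarith
  hence "(1 + \<epsilon>) * K \<le> (a / K) * h * K" using assms by (intro mult_right_mono) auto
  also have "\<dots> = a * h" using assms by simp
  finally show ?thesis .
qed

lemma null_total:
  fixes \<epsilon> :: real
  assumes v: "valid n q" and r1: "1 \<le> r" and rn: "r < n" and eps: "\<epsilon> > 0"
  shows "prob_ev n q (\<lambda>G. scan_test n q r \<epsilon> G \<noteq> 0) \<le> (\<Sum>k=1..r. exp (1 - \<epsilon>/2 * ln (real n / real r)) ^ k)"
proof -
  let ?S = "{D. D \<subseteq> verts n \<and> 1 \<le> card D \<and> card D \<le> r}"
  let ?\<tau> = "1 + \<epsilon>/2"
  define \<Lambda> where "\<Lambda> = ln (real n / real r)"
  have cv: "card (verts n) = n" by (simp add: verts_def)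
  have fS: "finite ?S" by (rule finite_subset[of _ "Pow (verts n)"]) (auto simp: verts_def)
  have "prob_ev n q (\<lambda>G. scan_test n q r \<epsilon> G \<noteq> 0) \<le> prob_ev n q (\<lambda>G. \<exists>D\<in>?S. scanT n q D G \<ge> ?\<tau>)"
    by (rule prob_ev_mono[OF v]) (auto simp: scan_test_def split: if_splits)
  also have "\<dots> \<le> (\<Sum>D\<in>?S. prob_ev n q (\<lambda>G. scanT n q D G \<ge> ?\<tau>))"
    by (rule union_bound[OF v fS])
  also have "\<dots> \<le> (\<Sum>D\<in>?S. exp (- (?\<tau> * card D * ln (real n / card D))))"
  proof (rule sum_mono)
    fix D assume "D \<in> ?S"
    hence "1 \<le> card D" "card D < n" using rn by auto
    thus "prob_ev n q (\<lambda>G. scanT n q D G \<ge> ?\<tau>) \<le> exp (- (?\<tau> * card D * ln (real n / card D)))"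
      using eps by (intro null_bound[OF v]) auto
  qed
  also have "\<dots> = (\<Sum>k=1..r. real (n choose k) * exp (- (?\<tau> * k * ln (real n / k))))"
    using sum_by_card[where V="verts n" and r=r and f="\<lambda>k. exp (- (?\<tau> * k * ln (real n / k)))"] cv
    by (simp add: verts_def)
  also have "\<dots> \<le> (\<Sum>k=1..r. exp (1 - \<epsilon>/2 * \<Lambda>) ^ k)"
  proof (rule sum_mono)
    fix k assume k: "k \<in> {1..r}"
    hence k1: "1 \<le> k" "k \<le> n" using rn by auto
    have kpos: "real k > 0" using k1 by simp
    have Lk: "ln (real n / real k) \<ge> \<Lambda>" unfolding \<Lambda>_def
      using k r1 rn by (intro ln_mono) (auto simp: field_simps intro!: mult_left_mono)
    have "real (n choose k) * exp (- (?\<tau> * k * ln (real n / k)))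
        \<le> exp (real k * ln (real n / real k) + real k) * exp (- (?\<tau> * k * ln (real n / k)))"
      by (intro mult_right_mono choose_exp_bound k1) auto
    also have "\<dots> = exp (real k * (1 - \<epsilon>/2 * ln (real n / real k)))"
      by (simp add: exp_add[symmetric] algebra_simps)
    also have "\<dots> \<le> exp (real k * (1 - \<epsilon>/2 * \<Lambda>))"
      using Lk kpos eps by (simp add: mult_left_mono)
    also have "\<dots> = exp (1 - \<epsilon>/2 * \<Lambda>) ^ k" by (simp add: exp_of_nat_mult)
    finally show "real (n choose k) * exp (- (?\<tau> * k * ln (real n / k))) \<le> exp (1 - \<epsilon>/2 * \<Lambda>) ^ k" .
  qed
  finally show ?thesis unfolding \<Lambda>_def .
qed



theorem theorem2:
  fixes p :: "nat \<Rightarrow> nat \<Rightarrow> nat \<Rightarrow> real"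
    and r :: "nat \<Rightarrow> nat"
    and \<rho> :: "nat \<Rightarrow> nat set \<Rightarrow> real"
    and \<epsilon> :: real
  assumes eps: "\<epsilon> > 0"
    and p_range: "\<And>n i j. i \<in> verts n \<Longrightarrow> j \<in> verts n \<Longrightarrow> i \<noteq> j \<Longrightarrow> 0 \<le> p n i j \<and> p n i j \<le> 1"
    and p_sym: "\<And>n i j. p n i j = p n j i"
    and rho_gt: "\<And>n C. C \<in> communities n (r n) \<Longrightarrow> \<rho> n C > 1"
    and rho_le: "\<And>n C i j. C \<in> communities n (r n) \<Longrightarrow> i \<in> C \<Longrightarrow> j \<in> C \<Longrightarrow> i \<noteq> j
                  \<Longrightarrow> \<rho> n C * p n i j \<le> 1"
    and r_small: "(\<lambda>n. real (r n) / real n) \<longlonglongrightarrow> 0"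
    and Dstar: "\<exists>Dstar :: nat \<Rightarrow> nat set \<Rightarrow> nat set.
                  (\<forall>n C. C \<in> communities n (r n) \<longrightarrow> most_informative n (p n) C (Dstar n C)) \<and>
                  (\<forall>M. \<forall>\<^sub>F n in sequentially. \<forall>C \<in> communities n (r n).
                        expect n (alt_prob (p n) (\<rho> n C) C) (ecount (Dstar n C)) \<ge> M)"
    and signal: "\<And>n C. C \<in> communities n (r n) \<Longrightarrow>
                  \<exists>D. D \<noteq> {} \<and> D \<subseteq> C \<and>
                      expect n (p n) (ecount D) * hfun (\<rho> n C - 1)
                        / (real (card D) * ln (real n / real (card D))) \<ge> 1 + \<epsilon>"
  shows "(\<lambda>n. risk n (p n) (\<rho> n) (r n) (scan_test n (p n) (r n) \<epsilon>)) \<longlonglongrightarrow> 0"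
proof -
  obtain DS where DS1: "\<forall>n C. C \<in> communities n (r n) \<longrightarrow> most_informative n (p n) C (DS n C)"
    and DS2: "\<forall>M. \<forall>\<^sub>F n in sequentially. \<forall>C \<in> communities n (r n).
                        expect n (alt_prob (p n) (\<rho> n C) C) (ecount (DS n C)) \<ge> M"
    using Dstar by blast
  have fin_comm: "finite (communities n k)" for n k
    by (rule finite_subset[of _ "Pow (verts n)"]) (auto simp: communities_def verts_def)
  have valid0: "valid n (p n)" for n
    using p_range by (auto simp: valid_def vpairs_def)
  have valid1: "valid n (alt_prob (p n) (\<rho> n C) C)" if C: "C \<in> communities n (r n)" for n C
  proof -
    have "0 \<le> alt_prob (p n) (\<rho> n C) C i j \<and> alt_prob (p n) (\<rho> n C) C i j \<le> 1"
      if ij: "(i,j) \<in> vpairs n" for i j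
    proof -
      have ij': "i \<in> verts n" "j \<in> verts n" "i \<noteq> j" using ij by (auto simp: vpairs_def)
      have p: "0 \<le> p n i j" "p n i j \<le> 1" using p_range[OF ij'] by auto
      have r1: "\<rho> n C > 1" by (rule rho_gt[OF C])
      show ?thesis
      proof (cases "i \<in> C \<and> j \<in> C")
        case True
        have "\<rho> n C * p n i j \<le> 1" using rho_le[OF C _ _ ij'(3)] True by auto
        moreover have "0 \<le> \<rho> n C * p n i j" using r1 p by simp
        ultimately show ?thesis using True by (simp add: alt_prob_def)
      next
        case False thus ?thesis using p by (auto simp: alt_prob_def)
      qed
    qed
    thus ?thesis by (simp add: valid_def)
  qed
  have comm_ne: "{1..r n} \<in> communities n (r n)" if "r n \<le> n" for n
    using that by (auto simp: communities_def verts_def)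
  have r_pos: "r n \<ge> 1" if "r n \<le> n" for n
  proof (rule ccontr)
    assume "\<not> r n \<ge> 1"
    hence r0: "r n = 0" by simp
    have "most_informative n (p n) {1..r n} (DS n {1..r n})" using DS1 comm_ne[OF that] by blast
    thus False using r0 by (auto simp: most_informative_def)
  qed
  define R where "R n = risk n (p n) (\<rho> n) (r n) (scan_test n (p n) (r n) \<epsilon>)" for n
  have prob_nonneg: "valid n q \<Longrightarrow> prob_ev n q P \<ge> 0" for n q P
    unfolding prob_ev_def by (rule sum_nonneg) (use graph_prob_nonneg in auto)
  have main: "\<forall>\<^sub>F n in sequentially. 0 \<le> R n \<and> R n < \<delta>" if \<delta>: "\<delta> > 0" for \<delta>
  proof -
    define Z where "Z = \<bar>ln (\<delta>/3)\<bar> + 1"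
    define c where "c = \<epsilon>/(2*(1+\<epsilon>))"
    define \<Lambda>0 where "\<Lambda>0 = max (max (2*(Z+2)/\<epsilon>) (4 * exp 2 * Z / c^2)) 1"
    define M0 where "M0 = 8 * Z / c^2"
    have c0: "c > 0" unfolding c_def using eps by simp
    have Z0: "Z \<ge> 1" unfolding Z_def by simp
    have expZ: "exp (- Z) \<le> \<delta>/3"
    proof -
      have "- Z \<le> ln (\<delta>/3)" unfolding Z_def by linarith
      hence "exp (- Z) \<le> exp (ln (\<delta>/3))" by simp
      thus ?thesis using \<delta> by simp
    qed
    have ev1: "\<forall>\<^sub>F n in sequentially. real (r n) / real n < exp (- \<Lambda>0)"
      by (rule order_tendstoD(2)[OF r_small]) simp
    have ev2: "\<forall>\<^sub>F n in sequentially. \<forall>C \<in> communities n (r n).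
                        expect n (alt_prob (p n) (\<rho> n C) C) (ecount (DS n C)) \<ge> M0"
      using DS2 by blast
    have ev3: "\<forall>\<^sub>F n in sequentially. n \<ge> 1" by (rule eventually_ge_at_top)
    show ?thesis using ev1 ev2 ev3
    proof eventually_elim
      case (elim n)
      have L01: "\<Lambda>0 \<ge> 1" unfolding \<Lambda>0_def by simp
      have "exp (- \<Lambda>0) < 1" using L01 by simp
      hence "real (r n) / real n < 1" using elim(1) by linarith
      have npos: "real n > 0" using elim(3) by simp
      have "real (r n) < 1 * real n" using \<open>real (r n) / real n < 1\<close> npos by (simp only: pos_divide_less_eq)
      hence rn: "r n < n" by simp
      have r1: "r n \<ge> 1" using r_pos rn by simp
      define \<Lambda> where "\<Lambda> = ln (real n / real (r n))"
      have rpos: "real (r n) > 0" using r1 by simp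
      have "real n / real (r n) > exp \<Lambda>0"
      proof -
        have "real (r n) < exp (- \<Lambda>0) * real n" using elim(1) npos by (simp only: pos_divide_less_eq)
        hence "real (r n) * exp \<Lambda>0 < exp (- \<Lambda>0) * real n * exp \<Lambda>0" by (intro mult_strict_right_mono) auto
        also have "exp (- \<Lambda>0) * real n * exp \<Lambda>0 = real n" by (simp add: exp_minus)
        finally have "exp \<Lambda>0 * real (r n) < real n" by (simp add: mult.commute)
        thus ?thesis using rpos by (simp only: pos_less_divide_eq)
      qed
      hence "ln (exp \<Lambda>0) < ln (real n / real (r n))" using rpos npos by (subst ln_less_cancel_iff) auto
      hence Lam: "\<Lambda> > \<Lambda>0" unfolding \<Lambda>_def by simp
      have LamZ1: "\<Lambda> \<ge> 2*(Z+2)/\<epsilon>" and LamZ2: "\<Lambda> \<ge> 4 * exp 2 * Z / c^2" and Lam1: "\<Lambda> \<ge> 1"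
        using Lam unfolding \<Lambda>0_def by auto
      define qq where "qq = exp (1 - \<epsilon>/2 * \<Lambda>)"
      have qq_le: "qq \<le> exp (- Z) * exp (-1)"
      proof -
        have "\<epsilon>/2 * \<Lambda> \<ge> \<epsilon>/2 * (2*(Z+2)/\<epsilon>)" using LamZ1 eps by (intro mult_left_mono) auto
        also have "\<epsilon>/2 * (2*(Z+2)/\<epsilon>) = Z + 2" using eps by simp
        finally have "1 - \<epsilon>/2 * \<Lambda> \<le> - Z + -1" by simp
        hence "qq \<le> exp (- Z + -1)" unfolding qq_def by simp
        thus ?thesis using exp_add[of "- Z" "-1"] by simp
      qed
      have e1: "exp (-1::real) \<le> 1/2"
      proof -
        have "2 \<le> exp (1::real)" using exp_ge_add_one_self[of 1] by simp
        hence "inverse (exp (1::real)) \<le> inverse 2" by (intro le_imp_inverse_le) auto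
        thus ?thesis by (simp add: exp_minus)
      qed
      have eZ: "exp (- Z) \<le> 1" using Z0 by simp
      have qq0: "qq \<ge> 0" unfolding qq_def by simp
      have qqh: "qq \<le> 1/2"
      proof -
        have "exp (- Z) * exp (-1) \<le> 1 * (1/2)" using e1 eZ by (intro mult_mono) auto
        thus ?thesis using qq_le by simp
      qed
      have qq2: "2 * qq \<le> \<delta>/3"
      proof -
        have "exp (- Z) * exp (-1) \<le> exp (- Z) * (1/2)" using e1 by (intro mult_left_mono) auto
        thus ?thesis using qq_le expZ by linarith
      qed
      have null: "prob_ev n (p n) (\<lambda>G. scan_test n (p n) (r n) \<epsilon> G \<noteq> 0) \<le> \<delta>/3"
      proof -
        have "prob_ev n (p n) (\<lambda>G. scan_test n (p n) (r n) \<epsilon> G \<noteq> 0) \<le> (\<Sum>k=1..r n. qq ^ k)"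
          unfolding qq_def \<Lambda>_def by (rule null_total[OF valid0 r1 rn eps])
        also have "\<dots> \<le> 2 * qq" by (rule geom_sum_bound[OF qq0 qqh])
        finally show ?thesis using qq2 by simp
      qed
      have alt: "prob_ev n (alt_prob (p n) (\<rho> n C) C) (\<lambda>G. scan_test n (p n) (r n) \<epsilon> G \<noteq> 1) \<le> \<delta>/3"
        if C: "C \<in> communities n (r n)" for C
      proof -
        define D where "D = DS n C"
        have mi: "most_informative n (p n) C D" using DS1 C unfolding D_def by blast
        have DC: "D \<noteq> {}" "D \<subseteq> C" using mi by (auto simp: most_informative_def)
        have Cv: "C \<subseteq> verts n" "card C = r n" using C by (auto simp: communities_def)
        have finC: "finite C" using Cv by (auto intro: finite_subset simp: verts_def)
        have finD: "finite D" using DC finC by (auto intro: finite_subset)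
        have kD: "1 \<le> card D" using DC finD by (simp add: Suc_le_eq card_gt_0_iff)
        have kr: "card D \<le> r n" using card_mono[OF finC DC(2)] Cv by simp
        have kn: "card D < n" using kr rn by simp
        define m where "m = expect n (p n) (ecount D)"
        define \<mu> where "\<mu> = expect n (alt_prob (p n) (\<rho> n C) C) (ecount D)"
        have mu_eq: "\<mu> = \<rho> n C * m" unfolding \<mu>_def m_def by (rule alt_mean[OF DC(2)])
        have rho1: "\<rho> n C > 1" by (rule rho_gt[OF C])
        define h where "h = \<rho> n C * ln (\<rho> n C) - \<rho> n C + 1"
        have hpos: "h > 0"
        proof -
          have "(ln (\<rho> n C))^2/2 \<le> h" unfolding h_def by (rule hfun_rho_quad) (use rho1 in simp)
          moreover have "ln (\<rho> n C) > 0" using rho1 by simp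
          moreover have "(ln (\<rho> n C))^2 > 0" using \<open>ln (\<rho> n C) > 0\<close> by simp
          ultimately show ?thesis by linarith
        qed
        define K where "K = real (card D) * ln (real n / real (card D))"
        have K0: "K > 0" unfolding K_def using kD kn by simp
        have gK: "m * h \<ge> (1 + \<epsilon>) * K"
        proof -
          obtain D' where D': "D' \<noteq> {}" "D' \<subseteq> C" and
            sig: "expect n (p n) (ecount D') * hfun (\<rho> n C - 1)
                        / (real (card D') * ln (real n / real (card D'))) \<ge> 1 + \<epsilon>"
            using signal[OF C] by blast
          have hh: "hfun (\<rho> n C - 1) = h" unfolding h_def using rho1 by (simp add: hfun_rho)
          have ir: "info_ratio n (p n) D' \<le> info_ratio n (p n) D" using mi D' by (auto simp: most_informative_def)
          have ir': "expect n (p n) (ecount D') / (real (card D') * ln (real n / real (card D'))) \<le> m / K"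
            using ir unfolding info_ratio_def m_def K_def .
          show ?thesis by (rule g_lemma[OF sig[unfolded hh] ir' hpos K0])
        qed
        have "prob_ev n (alt_prob (p n) (\<rho> n C) C) (\<lambda>G. scan_test n (p n) (r n) \<epsilon> G \<noteq> 1)
             \<le> prob_ev n (alt_prob (p n) (\<rho> n C) C) (\<lambda>G. scanT n (p n) D G < 1 + \<epsilon>/2)"
        proof (rule prob_ev_mono[OF valid1[OF C]])
          fix G assume "G \<in> graphs n" "scan_test n (p n) (r n) \<epsilon> G \<noteq> 1"
          hence "\<not> (\<exists>D. D \<subseteq> verts n \<and> 1 \<le> card D \<and> card D \<le> r n \<and> scanT n (p n) D G \<ge> 1 + \<epsilon> / 2)"
            by (auto simp: scan_test_def split: if_splits)
          moreover have "D \<subseteq> verts n" using DC Cv by blast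
          ultimately show "scanT n (p n) D G < 1 + \<epsilon>/2" using kD kr by (meson not_le)
        qed
        also have "\<dots> \<le> exp (- min (c^2 * (m * h) / (4 * exp 2)) (c^2 * \<mu> / 8))"
          unfolding c_def h_def
          by (rule alt_bound[OF valid1[OF C] kD kn m_def[symmetric] \<mu>_def[symmetric] mu_eq rho1 eps])
             (use gK in \<open>simp add: h_def K_def\<close>)
        also have "\<dots> \<le> exp (- Z)"
        proof -
          have A: "c^2 * (m * h) / (4 * exp 2) \<ge> Z"
          proof -
            have "m * h \<ge> (1+\<epsilon>) * K" by (rule gK)
            moreover have "K \<ge> ln (real n / real (card D))"
            proof -
              have "ln (real n / real (card D)) > 0" using kD kn by simp
              moreover have "(1::real) \<le> real (card D)" using kD by simp
              ultimately have "1 * ln (real n / real (card D)) \<le> real (card D) * ln (real n / real (card D))"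
                by (intro mult_right_mono) auto
              thus ?thesis unfolding K_def by simp
            qed
            moreover have "ln (real n / real (card D)) \<ge> \<Lambda>"
            proof -
              have "real (card D) \<le> real (r n)" using kr by simp
              hence "real n / real (r n) \<le> real n / real (card D)"
                using kD npos by (intro divide_left_mono) auto
              moreover have "real n / real (r n) > 0" using npos rpos by simp
              ultimately show ?thesis unfolding \<Lambda>_def by simp
            qed
            moreover have "(1+\<epsilon>) * K \<ge> K" using K0 eps by simp
            ultimately have "m * h \<ge> \<Lambda>" by linarith
            hence "m * h \<ge> 4 * exp 2 * Z / c^2" using LamZ2 by linarith
            hence "c^2 * (m * h) \<ge> c^2 * (4 * exp 2 * Z / c^2)" using c0 by (intro mult_left_mono) auto
            also have "c^2 * (4 * exp 2 * Z / c^2) = 4 * exp 2 * Z" using c0 by simp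
            finally have "4 * exp 2 * Z \<le> c^2 * (m * h)" .
            thus ?thesis by (simp add: pos_le_divide_eq mult.commute)
          qed
          have B: "c^2 * \<mu> / 8 \<ge> Z"
          proof -
            have "\<mu> \<ge> M0" using elim(2) C unfolding \<mu>_def D_def by blast
            hence "c^2 * \<mu> \<ge> c^2 * M0" using c0 by (intro mult_left_mono) auto
            also have "c^2 * M0 = 8 * Z" unfolding M0_def using c0 by simp
            finally show ?thesis by simp
          qed
          show ?thesis using A B by simp
        qed
        also have "\<dots> \<le> \<delta>/3" by (rule expZ)
        finally show ?thesis .
      qed
      have fc: "finite (communities n (r n))" by (rule fin_comm)
      have nec: "communities n (r n) \<noteq> {}" using comm_ne[of n] rn by fastforce
      have maxle: "Max ((\<lambda>C. prob_ev n (alt_prob (p n) (\<rho> n C) C) (\<lambda>G. scan_test n (p n) (r n) \<epsilon> G \<noteq> 1)) ` communities n (r n)) \<le> \<delta>/3"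
        using alt fc nec by (subst Max_le_iff) auto
      have maxge: "Max ((\<lambda>C. prob_ev n (alt_prob (p n) (\<rho> n C) C) (\<lambda>G. scan_test n (p n) (r n) \<epsilon> G \<noteq> 1)) ` communities n (r n)) \<ge> 0"
      proof -
        obtain C where "C \<in> communities n (r n)" using nec by blast
        hence "prob_ev n (alt_prob (p n) (\<rho> n C) C) (\<lambda>G. scan_test n (p n) (r n) \<epsilon> G \<noteq> 1)
           \<le> Max ((\<lambda>C. prob_ev n (alt_prob (p n) (\<rho> n C) C) (\<lambda>G. scan_test n (p n) (r n) \<epsilon> G \<noteq> 1)) ` communities n (r n))"
          using fc by (intro Max_ge) auto
        moreover have "prob_ev n (alt_prob (p n) (\<rho> n C) C) (\<lambda>G. scan_test n (p n) (r n) \<epsilon> G \<noteq> 1) \<ge> 0"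
          by (rule prob_nonneg[OF valid1[OF \<open>C \<in> _\<close>]])
        ultimately show ?thesis by linarith
      qed
      have "prob_ev n (p n) (\<lambda>G. scan_test n (p n) (r n) \<epsilon> G \<noteq> 0) \<ge> 0" by (rule prob_nonneg[OF valid0])
      thus "0 \<le> R n \<and> R n < \<delta>" unfolding R_def risk_def using null maxle maxge \<delta> by linarith
    qed
  qed
  show ?thesis
  proof (rule LIMSEQ_I)
    fix \<delta> :: real assume "0 < \<delta>"
    from main[OF this] obtain N where "\<And>n. n \<ge> N \<Longrightarrow> 0 \<le> R n \<and> R n < \<delta>"
      by (auto simp: eventually_sequentially)
    thus "\<exists>no. \<forall>n\<ge>no. norm (risk n (p n) (\<rho> n) (r n) (scan_test n (p n) (r n) \<epsilon>) - 0) < \<delta>"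
    proof (intro exI allI impI)
      fix n assume "n \<ge> N"
      hence "0 \<le> R n \<and> R n < \<delta>" by fact
      thus "norm (risk n (p n) (\<rho> n) (r n) (scan_test n (p n) (r n) \<epsilon>) - 0) < \<delta>"
        unfolding R_def by simp
    qed
  qed
qed


end
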